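(* Suppose the index set $\{1,\dots,q\}$ is partitioned into disjoint nonempty cliques $V_1,\dots,V_J$ with $v_g=|V_g|$, and let $\tilde\beta$ be a minimizer over $b\in\mathbb R^q$ of $$G(b;\lambda_2)=\frac1{2n}\|y-Xb\|^2+\frac12\lambda_2\sum_{g=1}^J b_g'(I_{v_g}-v_g^{-1}\mathbf 1_g\mathbf 1_g')b_g,$$ where $\lambda_2\ge0$, $b_g=(b_j)_{j\in V_g}$ and $\mathbf 1_g$ is the all-ones vector of length $v_g$. Let $\bar\beta_g=v_g^{-1}\sum_{j\in V_g}\tilde\beta_j$. Then (i) for any $1\le g\le J$ and $j,k\in V_g$: $\lambda_2|\tilde\beta_j-\tilde\beta_k|\le\frac1n\|x_j-x_k\|\,\|y\|$; (ii) for any $g\neq h$, $j\in V_g$, $k\in V_h$: $\lambda_2|\tilde\beta_j-\bar\beta_g-(\tilde\beta_k-\bar\beta_h)|\le\frac1n\|x_j-x_k\|\,\|y\|$.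
   Context: $y\in\mathbb R^n$, $X=(x_1,\dots,x_q)\in\mathbb R^{n\times q}$ a real design matrix. The penalty is the quadratic form of the normalized Laplacian $L=I_q-A$ with block-diagonal $A=\operatorname{diag}(A_1,\dots,A_J)$, $A_g=v_g^{-1}\mathbf 1_g\mathbf 1_g'$ (after ordering indices by cliques). *)

theory Defs
  imports "HOL-Analysis.Analysis" "HOL-Library.Disjoint_Sets"
begin

text \<open>Clique-wise penalty: sum over cliques g of the quadratic form
  b_g' (I - v_g^{-1} 1 1') b_g, written out entrywise.\<close>
definition clique_penalty :: "'q::finite set set \<Rightarrow> real^'q \<Rightarrow> real" where
  "clique_penalty P b =
     (\<Sum>g\<in>P. \<Sum>j\<in>g. \<Sum>k\<in>g.
        b$j * ((if j = k then 1 else 0) - 1 / real (card g)) * b$k)"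

definition objG :: "real^'n \<Rightarrow> real^'q^'n \<Rightarrow> 'q::finite set set \<Rightarrow> real \<Rightarrow> real^'q \<Rightarrow> real" where
  "objG y X P lam b =
     1 / (2 * real CARD('n)) * (norm (y - X *v b))\<^sup>2 + 1/2 * lam * clique_penalty P b"

definition clique_mean :: "real^'q \<Rightarrow> 'q set \<Rightarrow> real" where
  "clique_mean b g = (\<Sum>j\<in>g. b$j) / real (card g)"

end

theory Submission
  imports Defs
begin

lemma quad_min_zero:
  fixes A B :: real
  assumes "\<forall>t. 0 \<le> t * A + t^2 * B"
  shows "A = 0"
proof (rule ccontr)
  assume nz: "A \<noteq> 0"
  define t where "t = - A / (2 * (\<bar>B\<bar> + 1))"
  have pos: "2 * (\<bar>B\<bar> + 1) > 0" by simp
  have "t * A + t^2 * B = t * (A + t * B)" by (simp add: power2_eq_square algebra_simps)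
  also have "A + t * B = A * (1 - B / (2 * (\<bar>B\<bar> + 1)))"
    by (simp add: t_def field_simps)
  finally have e: "t * A + t^2 * B = - (A^2) / (2 * (\<bar>B\<bar> + 1)) * (1 - B / (2 * (\<bar>B\<bar> + 1)))"
    by (simp add: t_def power2_eq_square)
  have "\<bar>B / (2 * (\<bar>B\<bar> + 1))\<bar> < 1"
    using pos by (simp add: abs_divide)
  hence f: "1 - B / (2 * (\<bar>B\<bar> + 1)) > 0" by linarith
  have "A^2 > 0" using nz by simp
  hence "- (A^2) / (2 * (\<bar>B\<bar> + 1)) < 0" using pos by (simp add: divide_neg_pos)
  hence "- (A^2) / (2 * (\<bar>B\<bar> + 1)) * (1 - B / (2 * (\<bar>B\<bar> + 1))) < 0"
    using f by (rule mult_neg_pos)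
  hence "t * A + t^2 * B < 0" using e by simp
  thus False using assms by (meson not_le)
qed

definition bil :: "'q::finite set set \<Rightarrow> real^'q \<Rightarrow> real^'q \<Rightarrow> real" where
  "bil P a b = (\<Sum>g\<in>P. \<Sum>j\<in>g. \<Sum>k\<in>g.
        a$j * ((if j = k then 1 else 0) - 1 / real (card g)) * b$k)"

lemma bil_sym: "bil P a b = bil P b a"
  unfolding bil_def
  apply (rule sum.cong, simp)
  apply (subst sum.swap)
  apply (intro sum.cong refl)
  by (auto simp: algebra_simps)

lemma pen_expand:
  "clique_penalty P (b + t *\<^sub>R d) = clique_penalty P b + t * (2 * bil P d b) + t^2 * clique_penalty P d"
proof -
  let ?M = "\<lambda>g j k. ((if j = k then 1 else 0) - 1 / real (card g))"
  have "clique_penalty P (b + t *\<^sub>R d) = (\<Sum>g\<in>P. \<Sum>j\<in>g. \<Sum>k\<in>g.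
      b$j * ?M g j k * b$k + (t * (d$j * ?M g j k * b$k) + (t * (b$j * ?M g j k * d$k) + t^2 * (d$j * ?M g j k * d$k))))"
    unfolding clique_penalty_def
    by (intro sum.cong refl) (simp add: algebra_simps power2_eq_square add_divide_distrib diff_divide_distrib)
  also have "\<dots> = bil P b b + (t * bil P d b + (t * bil P b d + t^2 * bil P d d))"
    unfolding bil_def by (simp only: sum.distrib sum_distrib_left)
  finally have "clique_penalty P (b + t *\<^sub>R d) = bil P b b + t * bil P d b + t * bil P b d + t^2 * bil P d d"
    by simp
  thus ?thesis using bil_sym[of P b d] by (simp add: clique_penalty_def bil_def[symmetric])
qed

lemma pen_nonneg:
  fixes b :: "real^'q::finite"
  shows "clique_penalty P b \<ge> 0"
  unfolding clique_penalty_def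
proof (rule sum_nonneg)
  fix g assume "g \<in> P"
  define c where "c = real (card g)"
  define m where "m = (\<Sum>j\<in>g. b$j) / c"
  have inner: "\<And>j. j \<in> g \<Longrightarrow> (\<Sum>k\<in>g. b$j * ((if j = k then 1 else 0) - 1 / c) * b$k) = b$j * (b$j - m)"
  proof -
    fix j assume j: "j \<in> g"
    have "(\<Sum>k\<in>g. b$j * ((if j = k then 1 else 0) - 1 / c) * b$k)
        = (\<Sum>k\<in>g. (if j = k then b$j * b$k else 0)) - (\<Sum>k\<in>g. b$j * b$k / c)"
      by (subst sum_subtractf[symmetric]) (intro sum.cong refl, simp add: algebra_simps)
    also have "\<dots> = b$j * b$j - b$j * m"
      using j by (simp add: m_def sum_divide_distrib[symmetric] sum_distrib_left)
    finally show "?thesis j" by (simp add: algebra_simps)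
  qed
  have "(\<Sum>j\<in>g. \<Sum>k\<in>g. b$j * ((if j = k then 1 else 0) - 1 / real (card g)) * b$k)
      = (\<Sum>j\<in>g. b$j * (b$j - m))" using inner by (simp add: c_def)
  also have "\<dots> = (\<Sum>j\<in>g. (b$j - m)^2)"
  proof -
    have "(\<Sum>j\<in>g. (b$j - m)^2) = (\<Sum>j\<in>g. b$j * (b$j - m)) - m * (\<Sum>j\<in>g. (b$j - m))"
      by (simp add: sum_subtractf[symmetric] sum_distrib_left power2_eq_square algebra_simps)
    moreover have "(\<Sum>j\<in>g. (b$j - m)) = 0"
    proof (cases "g = {}")
      case True thus ?thesis by simp
    next
      case False
      hence "c > 0" by (simp add: c_def card_gt_0_iff)
      thus ?thesis by (simp add: sum_subtractf m_def c_def)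
    qed
    ultimately show ?thesis by simp
  qed
  also have "\<dots> \<ge> 0" by (simp add: sum_nonneg)
  finally show "0 \<le> (\<Sum>j\<in>g. \<Sum>k\<in>g. b$j * ((if j = k then 1 else 0) - 1 / real (card g)) * b$k)" .
qed

lemma bil_axis:
  fixes \<beta> :: "real^'q::finite"
  assumes part: "partition_on UNIV P" and g: "g \<in> P" "j \<in> g" and h: "h \<in> P" "k \<in> h"
  shows "bil P (axis j 1 - axis k 1) \<beta> = (\<beta>$j - clique_mean \<beta> g) - (\<beta>$k - clique_mean \<beta> h)"
proof -
  have finP: "finite P" by simp
  have uniq: "\<And>g g' x. g \<in> P \<Longrightarrow> g' \<in> P \<Longrightarrow> x \<in> g \<Longrightarrow> x \<in> g' \<Longrightarrow> g = g'"
    using partition_onD2[OF part] by (meson disjointD disjoint_iff)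
  define F where "F = (\<lambda>g x. \<beta>$x - clique_mean \<beta> g)"
  have inner: "\<And>g x. x \<in> g \<Longrightarrow> (\<Sum>k\<in>g. ((if x = k then 1 else 0) - 1 / real (card g)) * \<beta>$k) = F g x"
  proof -
    fix g :: "'q set" and x assume x: "x \<in> g"
    have "(\<Sum>k\<in>g. ((if x = k then 1 else 0) - 1 / real (card g)) * \<beta>$k)
        = (\<Sum>k\<in>g. (if x = k then \<beta>$k else 0)) - (\<Sum>k\<in>g. \<beta>$k / real (card g))"
      by (subst sum_subtractf[symmetric]) (intro sum.cong refl, simp add: algebra_simps)
    thus "?thesis g x" using x by (simp add: F_def clique_mean_def sum_divide_distrib[symmetric])
  qed
  have "bil P (axis j 1 - axis k 1) \<beta>
      = (\<Sum>g\<in>P. \<Sum>x\<in>g. (axis j 1 - axis k 1 :: real^'q)$x * F g x)"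
    unfolding bil_def
    by (intro sum.cong refl) (simp add: inner[symmetric] sum_distrib_left mult.assoc)
  also have "\<dots> = (\<Sum>g\<in>P. (if j \<in> g then F g j else 0) - (if k \<in> g then F g k else 0))"
    by (intro sum.cong refl)
       (simp add: axis_def left_diff_distrib sum_subtractf if_distrib[of "\<lambda>z. z * _"] sum.delta' cong: if_cong)
  also have "\<dots> = (\<Sum>g'\<in>P. (if g' = g then F g j else 0)) - (\<Sum>g'\<in>P. (if g' = h then F h k else 0))"
    unfolding sum_subtractf[symmetric]
    by (intro sum.cong refl) (use g h uniq in auto)
  also have "\<dots> = F g j - F h k" using g h by simp
  finally show ?thesis by (simp add: F_def)
qed

lemma key:
  fixes y :: "real^'n" and X :: "real^'q::finite^'n"
    and P :: "'q set set" and lam :: real and \<beta> :: "real^'q"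
  assumes part: "partition_on UNIV P"
    and lam: "lam \<ge> 0"
    and min: "\<forall>b. objG y X P lam \<beta> \<le> objG y X P lam b"
    and g: "g \<in> P" "j \<in> g" and h: "h \<in> P" "k \<in> h"
  shows "lam * \<bar>\<beta>$j - clique_mean \<beta> g - (\<beta>$k - clique_mean \<beta> h)\<bar>
              \<le> 1 / real CARD('n) * norm (column j X - column k X) * norm y"
proof -
  define n where "n = real CARD('n)"
  have npos: "n > 0" by (simp add: n_def)
  define r where "r = y - X *v \<beta>"
  define w where "w = column j X - column k X"
  define d :: "real^'q" where "d = axis j 1 - axis k 1"
  have Xd: "X *v d = w" by (simp add: d_def w_def matrix_vector_mult_diff_distrib matrix_vector_mult_basis)
  define A where "A = - (1/n) * (r \<bullet> w) + lam * bil P d \<beta>"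
  define B where "B = (1/(2*n)) * (norm w)^2 + 1/2 * lam * clique_penalty P d"
  have exp: "\<And>t. objG y X P lam (\<beta> + t *\<^sub>R d) = objG y X P lam \<beta> + t * A + t^2 * B"
  proof -
    fix t
    have e1: "y - X *v (\<beta> + t *\<^sub>R d) = r - t *\<^sub>R w"
      by (simp add: r_def Xd[symmetric] matrix_vector_right_distrib matrix_vector_mult_scaleR)
    have i1: "(norm (r - t *\<^sub>R w))^2 = (r - t *\<^sub>R w) \<bullet> (r - t *\<^sub>R w)"
      by (rule power2_norm_eq_inner)
    have i2: "(norm r)^2 = r \<bullet> r" "(norm w)^2 = w \<bullet> w" by (rule power2_norm_eq_inner)+
    have "(norm (y - X *v (\<beta> + t *\<^sub>R d)))^2 = (norm r)^2 - 2 * t * (r \<bullet> w) + t^2 * (norm w)^2"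
      unfolding e1 i1 i2 by (simp add: inner_diff_left inner_diff_right inner_commute[of w r] power2_eq_square algebra_simps)
    note N = this
    show "?thesis t"
      unfolding objG_def pen_expand N r_def[symmetric] A_def B_def n_def[symmetric]
      using npos by (simp add: field_simps power2_eq_square)
  qed
  have "\<forall>t. 0 \<le> t * A + t^2 * B"
  proof
    fix t show "0 \<le> t * A + t^2 * B" using min exp[of t] by (metis add.assoc le_add_same_cancel1)
  qed
  hence A0: "A = 0" by (rule quad_min_zero)
  have S: "bil P d \<beta> = \<beta>$j - clique_mean \<beta> g - (\<beta>$k - clique_mean \<beta> h)"
    unfolding d_def by (rule bil_axis[OF part g h])
  have eq: "lam * (\<beta>$j - clique_mean \<beta> g - (\<beta>$k - clique_mean \<beta> h)) = (1/n) * (r \<bullet> w)"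
    using A0 S by (simp add: A_def)
  have rle: "norm r \<le> norm y"
  proof -
    have "objG y X P lam \<beta> \<le> objG y X P lam 0" using min by blast
    moreover have "clique_penalty P (0::real^'q) = 0" by (simp add: clique_penalty_def)
    moreover have "lam * clique_penalty P \<beta> \<ge> 0" using lam pen_nonneg[of P \<beta>] by simp
    ultimately have "1 / (2 * n) * (norm r)^2 \<le> 1 / (2 * n) * (norm y)^2"
      unfolding objG_def r_def n_def by simp
    hence "(norm r)^2 \<le> (norm y)^2" using npos
      by (metis divide_inverse_commute divide_le_cancel mult.commute zero_less_divide_1_iff
          mult_le_cancel_left_pos mult_pos_pos zero_less_numeral)
    thus ?thesis using power2_le_imp_le norm_ge_zero by blast
  qed
  have "lam * \<bar>\<beta>$j - clique_mean \<beta> g - (\<beta>$k - clique_mean \<beta> h)\<bar> = (1/n) * \<bar>r \<bullet> w\<bar>"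
    using eq lam npos by (metis abs_mult abs_of_nonneg abs_of_pos zero_less_divide_1_iff)
  also have "\<dots> \<le> (1/n) * (norm r * norm w)"
    using npos Cauchy_Schwarz_ineq2[of r w] by (simp add: divide_right_mono)
  also have "\<dots> \<le> (1/n) * (norm y * norm w)"
    using npos rle by (simp add: mult_right_mono divide_right_mono)
  finally show ?thesis by (simp add: n_def w_def algebra_simps)
qed

theorem proposition2:
  fixes y :: "real^'n" and X :: "real^'q::finite^'n"
    and P :: "'q set set" and lam :: real and \<beta> :: "real^'q"
  assumes part: "partition_on UNIV P"
    and lam: "lam \<ge> 0"
    and min: "\<forall>b. objG y X P lam \<beta> \<le> objG y X P lam b"
  shows "(\<forall>g\<in>P. \<forall>j\<in>g. \<forall>k\<in>g.
            lam * \<bar>\<beta>$j - \<beta>$k\<bar> \<le> 1 / real CARD('n) * norm (column j X - column k X) * norm y)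
       \<and> (\<forall>g\<in>P. \<forall>h\<in>P. g \<noteq> h \<longrightarrow> (\<forall>j\<in>g. \<forall>k\<in>h.
            lam * \<bar>\<beta>$j - clique_mean \<beta> g - (\<beta>$k - clique_mean \<beta> h)\<bar>
              \<le> 1 / real CARD('n) * norm (column j X - column k X) * norm y))"
proof (intro conjI ballI impI)
  fix g j k assume "g \<in> P" "j \<in> g" "k \<in> g"
  from key[OF part lam min this(1,2) this(1,3)]
  show "lam * \<bar>\<beta>$j - \<beta>$k\<bar> \<le> 1 / real CARD('n) * norm (column j X - column k X) * norm y"
    by simp
next
  fix g h j k assume "g \<in> P" "h \<in> P" "g \<noteq> h" "j \<in> g" "k \<in> h"
  from key[OF part lam min this(1,4) this(2,5)]
  show "lam * \<bar>\<beta>$j - clique_mean \<beta> g - (\<beta>$k - clique_mean \<beta> h)\<bar>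
              \<le> 1 / real CARD('n) * norm (column j X - column k X) * norm y" .
qed

end
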